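(* Let $c>0$. There exist constants $T_0>0$ and $r_0>0$ depending only on $c$ such that for all $T\ge T_0$ and all integers $\ell\ge1$, $$F_{T-r_0,c,\ell}\setminus C_\ell\ \subseteq\ E_{T,c}\setminus C_0\ \subseteq\ F_{T+r_0,c}.$$
   Context: $\mathcal C=\{x\in\mathbb R^{n+2}: x_1^2+\dots+x_{n+1}^2=x_{n+2}^2,\ x_{n+2}>0\}$, $n\ge1$. For $T,c>0$: $E_{T,c}=\{x\in\mathcal C:2x_{n+2}(x_{n+2}-x_{n+1})<c^2,\ 1\le x_{n+2}<\cosh T\}$; $F_{T,c}=\{x\in\mathcal C:x_{n+2}^2-x_{n+1}^2<c^2,\ c\le x_{n+2}+x_{n+1}<ce^T\}$; for integers $\ell\ge1$, $c_\ell=c\,(\ell/(\ell+1))^{1/2}$ and $F_{T,c,\ell}=\{x\in\mathcal C:x_{n+2}^2-x_{n+1}^2<c_\ell^2,\ c\le x_{n+2}+x_{n+1}<ce^T\}$; $C_0=\{x\in\mathcal C:x_{n+2}\le \tfrac{c^2+c}2+1\}$ and $C_\ell=\{x\in\mathcal C:|x_{n+1}|/x_{n+2}\le \ell/(\ell+1)\}\cup C_0$. *)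

theory Defs
  imports "HOL-Analysis.Analysis"
begin

text \<open>Points of R^(n+2) are represented as functions nat => real with coordinates
  x 1, ..., x (n+2) and all other coordinates equal to 0.\<close>

definition light_cone :: "nat \<Rightarrow> (nat \<Rightarrow> real) set" where
  "light_cone n = {x. (\<forall>i. i \<notin> {1..n+2} \<longrightarrow> x i = 0) \<and>
      (\<Sum>i=1..n+1. (x i)^2) = (x (n+2))^2 \<and> x (n+2) > 0}"

definition E_set :: "nat \<Rightarrow> real \<Rightarrow> real \<Rightarrow> (nat \<Rightarrow> real) set" where
  "E_set n T c = {x \<in> light_cone n. 2 * x (n+2) * (x (n+2) - x (n+1)) < c^2 \<and>
      1 \<le> x (n+2) \<and> x (n+2) < cosh T}"

definition F_set :: "nat \<Rightarrow> real \<Rightarrow> real \<Rightarrow> (nat \<Rightarrow> real) set" where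
  "F_set n T c = {x \<in> light_cone n. (x (n+2))^2 - (x (n+1))^2 < c^2 \<and>
      c \<le> x (n+2) + x (n+1) \<and> x (n+2) + x (n+1) < c * exp T}"

definition c_ell :: "real \<Rightarrow> nat \<Rightarrow> real" where
  "c_ell c l = c * sqrt (real l / (real l + 1))"

definition F_ell_set :: "nat \<Rightarrow> real \<Rightarrow> real \<Rightarrow> nat \<Rightarrow> (nat \<Rightarrow> real) set" where
  "F_ell_set n T c l = {x \<in> light_cone n. (x (n+2))^2 - (x (n+1))^2 < (c_ell c l)^2 \<and>
      c \<le> x (n+2) + x (n+1) \<and> x (n+2) + x (n+1) < c * exp T}"

definition C0_set :: "nat \<Rightarrow> real \<Rightarrow> (nat \<Rightarrow> real) set" where
  "C0_set n c = {x \<in> light_cone n. x (n+2) \<le> (c^2 + c) / 2 + 1}"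

definition C_ell_set :: "nat \<Rightarrow> real \<Rightarrow> nat \<Rightarrow> (nat \<Rightarrow> real) set" where
  "C_ell_set n c l = {x \<in> light_cone n. \<bar>x (n+1)\<bar> / x (n+2) \<le> real l / (real l + 1)}
      \<union> C0_set n c"

end

theory Submission
  imports Defs
begin

lemma cone_bound:
  assumes "x \<in> light_cone n"
  shows "\<bar>x (n+1)\<bar> \<le> x (n+2)" "x (n+2) > 0"
proof -
  have h: "(\<Sum>i=1..n+1. (x i)^2) = (x (n+2))^2" and p: "x (n+2) > 0"
    using assms by (auto simp: light_cone_def)
  have "(x (n+1))^2 \<le> (\<Sum>i=1..n+1. (x i)^2)"
    by (rule member_le_sum) auto
  with h have "(x (n+1))^2 \<le> (x (n+2))^2" by simp
  with p show "\<bar>x (n+1)\<bar> \<le> x (n+2)" using abs_le_square_iff[of "x (n+1)" "x (n+2)"] by simp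
  show "x (n+2) > 0" by (rule p)
qed

lemma incl2:
  fixes t s c T r0 :: real
  assumes "t > 0" "\<bar>s\<bar> \<le> t" "2*t*(t-s) < c^2" "t < cosh T" "t > (c^2+c)/2+1"
    "c * exp r0 \<ge> 2" "T \<ge> 0" "c > 0"
  shows "t^2 - s^2 < c^2" "c \<le> t+s" "t+s < c * exp (T+r0)"
proof -
  have "t^2 - s^2 = (t+s)*(t-s)" by (simp add: power2_eq_square algebra_simps)
  also have "\<dots> \<le> 2*t*(t-s)" using assms(2) by (intro mult_right_mono) auto
  finally show "t^2 - s^2 < c^2" using assms(3) by linarith
  have b: "c^2 + c + 2 < 2*t" using assms(5) by (simp add: field_simps)
  have "2*t*(t-s) < 2*t*1" using assms(3) b assms(8) by simp
  hence "t - s < 1" using assms(1) by (simp only: mult_less_cancel_left_pos[of "2*t"])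
  thus "c \<le> t+s" using b assms(8) zero_le_power2[of c] by linarith
  have "2*cosh T \<le> exp T + 1" using assms(7) by (simp add: cosh_def)
  also have "\<dots> \<le> 2 * exp T" using assms(7) by simp
  also have "\<dots> \<le> c * exp r0 * exp T" using assms(6) by (intro mult_right_mono) auto
  finally have "2*cosh T \<le> c * exp (T+r0)" by (simp add: exp_add mult_ac)
  thus "t+s < c * exp (T+r0)" using assms(2,4) by linarith
qed

lemma incl1:
  fixes t s c T r0 L :: real
  assumes "t > 0" "\<bar>s\<bar> \<le> t" "t^2 - s^2 < c^2 * (L/(L+1))" "c \<le> t+s"
    "t+s < c * exp (T-r0)" "\<not> (\<bar>s\<bar>/t \<le> L/(L+1))" "t > (c^2+c)/2+1"
    "c * exp (-r0) \<le> 1/2" "2*c \<le> exp T" "c > 0" "L \<ge> 1"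
  shows "2*t*(t-s) < c^2" "1 \<le> t" "t < cosh T"
proof -
  define u where "u = t+s"
  define v where "v = t-s"
  have v0: "v \<ge> 0" using assms(2) by (simp add: v_def)
  have uv: "u * v = t^2-s^2" by (simp add: u_def v_def power2_eq_square algebra_simps)
  have LL: "L/(L+1) < 1" "L/(L+1) > 0" using assms(11) by auto
  have uvc: "u * v < c^2"
  proof -
    have "c^2 * (L/(L+1)) < c^2 * 1" using LL assms(10) by (intro mult_strict_left_mono) auto
    thus ?thesis using uv assms(3) by linarith
  qed
  have s0: "s \<ge> 0"
  proof (rule ccontr)
    assume "\<not> s \<ge> 0"
    hence "u \<le> v" by (simp add: u_def v_def)
    moreover have "c \<le> u" using assms(4) by (simp add: u_def)
    ultimately have "c*c \<le> u * v" using assms(10) by (intro mult_mono) auto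
    thus False using uvc by (simp add: power2_eq_square)
  qed
  have "L/(L+1) < s/t" using assms(6) s0 by simp
  hence "L*t < s*(L+1)" using assms(1) assms(11) by (simp add: field_simps)
  hence key: "(2*L+1) * v < u" by (simp add: u_def v_def algebra_simps)
  have "v * c \<le> v * u" using v0 assms(4) by (intro mult_left_mono) (auto simp: u_def)
  hence "c * v < c * c" using uvc by (simp add: power2_eq_square mult.commute)
  hence vc: "v < c" using assms(10) by simp
  have "(2*L+1)*(2*t * v) = (2*L+1)*(u * v) + ((2*L+1) * v) * v" by (simp add: u_def v_def algebra_simps)
  also have "\<dots> \<le> (2*L+1)*(u * v) + u * v" using key v0 by (intro add_left_mono mult_right_mono) auto
  also have "\<dots> = (2*L+2)*(u * v)" by (simp add: algebra_simps)
  also have "\<dots> < (2*L+2)*(c^2 * (L/(L+1)))" using uv assms(3,11) by (intro mult_strict_left_mono) auto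
  also have "\<dots> = 2*L*c^2" using assms(11) by (simp add: field_simps)
  also have "\<dots> < (2*L+1)*c^2" using assms(10) by simp
  finally have "(2*L+1)*(2*t * v) < (2*L+1)*c^2" .
  hence "2*t * v < c^2" using assms(11) by (simp only: mult_less_cancel_left_pos)
  thus "2*t*(t-s) < c^2" by (simp add: v_def)
  have "c^2 + c + 2 < 2*t" using assms(7) by (simp add: field_simps)
  thus "1 \<le> t" using assms(10) zero_le_power2[of c] by linarith
  have "c * exp (T-r0) = (c * exp (-r0)) * exp T" by (simp add: exp_diff exp_minus field_simps)
  also have "\<dots> \<le> 1/2 * exp T" using assms(8) by (intro mult_right_mono) auto
  finally have "u \<le> exp T / 2" using assms(5) by (simp add: u_def)
  moreover have "v \<le> exp T / 2" using vc assms(9) by simp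
  ultimately have "t \<le> exp T / 2" by (simp add: u_def v_def)
  also have "\<dots> < cosh T" by (simp add: cosh_def)
  finally show "t < cosh T" .
qed

theorem lemma2p1:
  fixes c :: real
  assumes "c > 0"
  shows "\<exists>T0 r0. T0 > 0 \<and> r0 > 0 \<and>
    (\<forall>n::nat. n \<ge> 1 \<longrightarrow> (\<forall>T. T \<ge> T0 \<longrightarrow> (\<forall>l::nat. l \<ge> 1 \<longrightarrow>
      F_ell_set n (T - r0) c l - C_ell_set n c l \<subseteq> E_set n T c - C0_set n c \<and>
      E_set n T c - C0_set n c \<subseteq> F_set n (T + r0) c)))"
proof -
  define r0 where "r0 = ln (2*c+2+2/c)"
  define T0 where "T0 = ln (2*c+1) + 1"
  have A: "2*c+2+2/c > 1" using assms by (simp add: add_pos_pos)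
  have r0p: "r0 > 0" using A by (simp add: r0_def)
  have "ln (2*c+1) \<ge> 0" using assms by simp
  hence T0p: "T0 > 0" by (simp add: T0_def)
  have er0: "exp r0 = 2*c+2+2/c" using A by (simp add: r0_def)
  have c1: "c * exp r0 \<ge> 2"
  proof -
    have "c * exp r0 = 2*c^2+2*c+2" using assms by (simp add: er0 field_simps power2_eq_square)
    thus ?thesis using assms by (smt (verit) zero_le_power2)
  qed
  have c2: "c * exp (-r0) \<le> 1/2"
  proof -
    have "c * exp (-r0) = c / (2*c+2+2/c)" by (simp add: exp_minus er0 field_simps)
    also have "\<dots> \<le> 1/2" using assms A by (simp add: field_simps)
    finally show ?thesis .
  qed
  have eT: "2*c \<le> exp T" if "T \<ge> T0" for T
  proof -
    have "exp T0 = (2*c+1) * exp 1" using assms by (simp add: T0_def exp_add)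
    also have "\<dots> \<ge> 2*c+1" using assms by (simp add: one_le_exp_iff)
    finally have "exp T0 \<ge> 2*c+1" .
    moreover have "exp T0 \<le> exp T" using that by simp
    ultimately show ?thesis by linarith
  qed
  show ?thesis
  proof (rule exI[of _ T0], rule exI[of _ r0], intro conjI r0p T0p allI impI subsetI)
    fix n :: nat and T :: real and l :: nat and x
    assume n1: "n \<ge> 1" and TT: "T \<ge> T0" and l1: "l \<ge> 1"
    assume xin: "x \<in> F_ell_set n (T - r0) c l - C_ell_set n c l"
    hence cone: "x \<in> light_cone n" by (simp add: F_ell_set_def)
    note cb = cone_bound[OF cone]
    have ce: "(c_ell c l)^2 = c^2 * (real l/(real l+1))"
      by (simp add: c_ell_def power_mult_distrib)
    have h: "(x (n+2))^2 - (x (n+1))^2 < c^2 * (real l/(real l+1))"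
      "c \<le> x (n+2) + x (n+1)" "x (n+2) + x (n+1) < c * exp (T-r0)"
      "\<not> (\<bar>x (n+1)\<bar>/x (n+2) \<le> real l/(real l+1))"
      "x (n+2) > (c^2+c)/2+1"
      using xin cone ce by (auto simp: F_ell_set_def C_ell_set_def C0_set_def)
    have "real l \<ge> 1" using l1 by simp
    note r = incl1[OF cb(2) cb(1) h(1) h(2) h(3) h(4) h(5) c2 eT[OF TT] assms this]
    show "x \<in> E_set n T c - C0_set n c"
      using r cone h(5) by (auto simp: E_set_def C0_set_def mult.assoc)
  next
    fix n :: nat and T :: real and l :: nat and x
    assume n1: "n \<ge> 1" and TT: "T \<ge> T0" and l1: "l \<ge> 1"
    assume xin: "x \<in> E_set n T c - C0_set n c"
    hence cone: "x \<in> light_cone n" by (simp add: E_set_def)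
    note cb = cone_bound[OF cone]
    have h: "2 * x (n+2) * (x (n+2) - x (n+1)) < c^2" "x (n+2) < cosh T"
      "x (n+2) > (c^2+c)/2+1"
      using xin cone by (auto simp: E_set_def C0_set_def)
    have "T \<ge> 0" using TT T0p by linarith
    note r = incl2[OF cb(2) cb(1) h(1) h(2) h(3) c1 this assms]
    show "x \<in> F_set n (T + r0) c"
      using r cone by (auto simp: F_set_def)
  qed
qed

end
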